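(* Let $G$ be a permutational digraph and $n\in\mathbb{N}$ (with $n\ge 0$). Then $G^{[0,n]}$ is congruence $(2n+2)$-permutable but not congruence $(2n+1)$-permutable.
   Context: Digraphs are finite and loopless. A digraph $G=(V,E)$ is permutational if it is a disjoint union of directed cycles, i.e. $E$ is (the graph of) a permutation of $V$ without fixed points. For integers $0\le j$, $G^{[0,j]}$ is the digraph on $V\cup\{1,\dots,j\}$ (disjoint) with edges: $u\to w$ for integers $1\le u<w\le j$; the edges of $E$; $v\to u$ for every $v\in V$ and $u\in\{1,\dots,j\}$. A polymorphism is a map $f:V^k\to V$ with $(f(a_1,\dots,a_k),f(b_1,\dots,b_k))\in E$ whenever all $(a_i,b_i)\in E$. A digraph is congruence $m$-permutable if it has ternary polymorphisms $p_0,\dots,p_m$ with $p_0(x,y,z)=x$, $p_i(x,x,y)=p_{i+1}(x,y,y)$ for $0\le i<m$, and $p_m(x,y,z)=z$, for all vertices. *)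

theory Defs
  imports "HOL-Combinatorics.Permutations"
begin

definition digraph :: "'a set \<Rightarrow> ('a \<times> 'a) set \<Rightarrow> bool" where
  "digraph V E \<longleftrightarrow> finite V \<and> E \<subseteq> V \<times> V \<and> (\<forall>v. (v, v) \<notin> E)"

definition permutational :: "'a set \<Rightarrow> ('a \<times> 'a) set \<Rightarrow> bool" where
  "permutational V E \<longleftrightarrow> digraph V E \<and>
     (\<exists>\<sigma>. \<sigma> permutes V \<and> (\<forall>v\<in>V. \<sigma> v \<noteq> v) \<and> E = {(v, \<sigma> v) | v. v \<in> V})"

text \<open>The digraph G^[0,j]: vertices V (as Inl) disjoint union {1..j} (as Inr).\<close>
definition ext_vertices :: "'a set \<Rightarrow> nat \<Rightarrow> ('a + nat) set" where
  "ext_vertices V j = Inl ` V \<union> Inr ` {1..j}"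

definition ext_edges :: "'a set \<Rightarrow> ('a \<times> 'a) set \<Rightarrow> nat \<Rightarrow> (('a + nat) \<times> ('a + nat)) set" where
  "ext_edges V E j =
     {(Inr u, Inr w) | u w. 1 \<le> u \<and> u < w \<and> w \<le> j}
   \<union> {(Inl a, Inl b) | a b. (a, b) \<in> E}
   \<union> {(Inl v, Inr u) | v u. v \<in> V \<and> 1 \<le> u \<and> u \<le> j}"

definition polymorphism3 :: "'a set \<Rightarrow> ('a \<times> 'a) set \<Rightarrow> ('a \<Rightarrow> 'a \<Rightarrow> 'a \<Rightarrow> 'a) \<Rightarrow> bool" where
  "polymorphism3 V E f \<longleftrightarrow>
     (\<forall>x\<in>V. \<forall>y\<in>V. \<forall>z\<in>V. f x y z \<in> V) \<and>
     (\<forall>a1 b1 a2 b2 a3 b3. (a1, b1) \<in> E \<longrightarrow> (a2, b2) \<in> E \<longrightarrow> (a3, b3) \<in> E \<longrightarrow>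
        (f a1 a2 a3, f b1 b2 b3) \<in> E)"

definition cong_permutable :: "'a set \<Rightarrow> ('a \<times> 'a) set \<Rightarrow> nat \<Rightarrow> bool" where
  "cong_permutable V E m \<longleftrightarrow>
     (\<exists>p :: nat \<Rightarrow> 'a \<Rightarrow> 'a \<Rightarrow> 'a \<Rightarrow> 'a.
        (\<forall>i\<le>m. polymorphism3 V E (p i)) \<and>
        (\<forall>x\<in>V. \<forall>y\<in>V. \<forall>z\<in>V. p 0 x y z = x) \<and>
        (\<forall>i<m. \<forall>x\<in>V. \<forall>y\<in>V. p i x x y = p (Suc i) x y y) \<and>
        (\<forall>x\<in>V. \<forall>y\<in>V. \<forall>z\<in>V. p m x y z = z))"

end

theory Submission
  imports Defs
begin

lemma extend_top:
  fixes W :: "'b set" and F :: "('b \<times> 'b) set" and t :: 'b and m :: nat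
  assumes FW: "F \<subseteq> W \<times> W" and tW: "t \<notin> W" and cp: "cong_permutable W F m" and m2: "2 \<le> m"
  shows "cong_permutable (insert t W) (F \<union> (\<lambda>w. (w,t)) ` W) (m+2)"
proof -
  from cp obtain p where poly: "\<forall>i\<le>m. polymorphism3 W F (p i)"
    and p0: "\<forall>x\<in>W. \<forall>y\<in>W. \<forall>z\<in>W. p 0 x y z = x"
    and pid: "\<forall>i<m. \<forall>x\<in>W. \<forall>y\<in>W. p i x x y = p (Suc i) x y y"
    and pm: "\<forall>x\<in>W. \<forall>y\<in>W. \<forall>z\<in>W. p m x y z = z"
    unfolding cong_permutable_def by blast
  define F' where "F' = F \<union> (\<lambda>w. (w,t)) ` W"
  have eA: "a \<in> W" if "(a,b) \<in> F'" for a b using that FW tW unfolding F'_def by auto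
  have eB: "(a,b) \<in> F" if "(a,b) \<in> F'" "b \<in> W" for a b using that FW tW unfolding F'_def by auto
  have eT: "(a,t) \<in> F'" if "a \<in> W" for a using that unfolding F'_def by auto
  have eF: "(a,b) \<in> F'" if "(a,b) \<in> F" for a b using that unfolding F'_def by auto
  define q where "q i x y z = (if i = 0 then x
      else if i = 1 then (if y = z \<or> (x\<in>W \<and> y\<in>W \<and> z\<in>W) then x else t)
      else if i = m+1 then (if x = y \<or> (x\<in>W \<and> y\<in>W \<and> z\<in>W) then z else t)
      else if i = m+2 then z
      else (if x\<in>W \<and> y\<in>W \<and> z\<in>W then p (i-1) x y z else t))" for i x y z
  have polyq: "polymorphism3 (insert t W) F' (q i)" if "i \<le> m+2" for i
    unfolding polymorphism3_def
  proof (intro conjI allI impI ballI)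
    fix x y z assume "x \<in> insert t W" "y \<in> insert t W" "z \<in> insert t W"
    then show "q i x y z \<in> insert t W"
      using poly that unfolding q_def polymorphism3_def by auto
  next
    fix a1 b1 a2 b2 a3 b3 assume e1: "(a1,b1) \<in> F'" and e2: "(a2,b2) \<in> F'" and e3: "(a3,b3) \<in> F'"
    have a: "a1 \<in> W" "a2 \<in> W" "a3 \<in> W" using e1 e2 e3 eA by auto
    consider "i = 0" | "i = 1" | "i = m+1" | "i = m+2" | "i \<noteq> 0" "i \<noteq> 1" "i \<noteq> m+1" "i \<noteq> m+2"
      by blast
    then show "(q i a1 a2 a3, q i b1 b2 b3) \<in> F'"
    proof cases
      case 1 then show ?thesis using e1 by (simp add: q_def)
    next
      case 2 then show ?thesis using e1 a eT by (simp add: q_def)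
    next
      case 3 then show ?thesis using e3 a eT m2 by (simp add: q_def)
    next
      case 4 then show ?thesis using e3 m2 by (simp add: q_def)
    next
      case 5
      have pi: "polymorphism3 W F (p (i-1))" using poly that 5 by (simp add: le_diff_conv)
      have qa: "q i a1 a2 a3 = p (i-1) a1 a2 a3" using 5 a by (simp add: q_def)
      have pa: "p (i-1) a1 a2 a3 \<in> W" using pi a unfolding polymorphism3_def by blast
      show ?thesis
      proof (cases "b1 \<in> W \<and> b2 \<in> W \<and> b3 \<in> W")
        case True
        then have "(a1,b1) \<in> F" "(a2,b2) \<in> F" "(a3,b3) \<in> F" using e1 e2 e3 eB by auto
        then have "(p (i-1) a1 a2 a3, p (i-1) b1 b2 b3) \<in> F" using pi unfolding polymorphism3_def by blast
        then show ?thesis using qa True 5 eF by (simp add: q_def)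
      next
        case False
        then show ?thesis using qa pa eT 5 by (auto simp: q_def)
      qed
    qed
  qed
  show ?thesis unfolding cong_permutable_def F'_def[symmetric]
  proof (intro exI[of _ q] conjI)
    show "\<forall>i\<le>m+2. polymorphism3 (insert t W) F' (q i)" using polyq by blast
    show "\<forall>x\<in>insert t W. \<forall>y\<in>insert t W. \<forall>z\<in>insert t W. q 0 x y z = x" by (simp add: q_def)
    show "\<forall>x\<in>insert t W. \<forall>y\<in>insert t W. \<forall>z\<in>insert t W. q (m+2) x y z = z" using m2 by (simp add: q_def)
    show "\<forall>i<m+2. \<forall>x\<in>insert t W. \<forall>y\<in>insert t W. q i x x y = q (Suc i) x y y"
    proof (intro allI impI ballI)
      fix i x y assume i: "i < m+2" and x: "x \<in> insert t W" and y: "y \<in> insert t W"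
      consider "i = 0" | "i = 1" | "i = m" | "i = m+1" | "1 < i" "i < m"
        using i by linarith
      then show "q i x x y = q (Suc i) x y y"
      proof cases
        case 1 then show ?thesis using m2 by (simp add: q_def)
      next
        case 2
        have "x \<in> W \<Longrightarrow> y \<in> W \<Longrightarrow> p 1 x y y = x" using pid p0 m2 by force
        then show ?thesis using 2 m2 x y tW by (auto simp: q_def)
      next
        case 3
        have "x \<in> W \<Longrightarrow> y \<in> W \<Longrightarrow> p (m-1) x x y = y" using pid[rule_format, of "m-1"] pm m2
          by (metis Suc_diff_1 diff_less less_le_trans zero_less_numeral zero_less_one)
        then show ?thesis using 3 m2 x y tW by (auto simp: q_def)
      next
        case 4 then show ?thesis using m2 by (simp add: q_def)
      next
        case 5
        have "x \<in> W \<Longrightarrow> y \<in> W \<Longrightarrow> p (i-1) x x y = p i x y y" using pid[rule_format, of "i-1"] 5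
          by (metis Suc_diff_1 less_imp_diff_less order.strict_trans zero_less_one)
        then show ?thesis using 5 by (auto simp: q_def)
      qed
    qed
  qed
qed


lemma ext_vertices_Suc:
  "ext_vertices V (Suc n) = insert (Inr (Suc n)) (ext_vertices V n)"
  unfolding ext_vertices_def by (auto simp: atLeastAtMostSuc_conv)

lemma ext_edges_Suc:
  "ext_edges V E (Suc n) = ext_edges V E n \<union> (\<lambda>w. (w, Inr (Suc n))) ` ext_vertices V n"
  unfolding ext_edges_def ext_vertices_def by (auto simp: le_Suc_eq)

lemma ext_edges_sub:
  assumes "E \<subseteq> V \<times> V"
  shows "ext_edges V E n \<subseteq> ext_vertices V n \<times> ext_vertices V n"
  using assms unfolding ext_edges_def ext_vertices_def by auto

lemma base_case:
  assumes s: "\<sigma> permutes V" and E: "E = {(v, \<sigma> v) | v. v \<in> V}"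
  shows "cong_permutable (ext_vertices V 0) (ext_edges V E 0) 2"
proof -
  have inj: "inj \<sigma>" using s permutes_inj by blast
  have sV: "\<sigma> v \<in> V" if "v \<in> V" for v using s that by (simp add: permutes_in_image)
  have W: "ext_vertices V 0 = Inl ` V" unfolding ext_vertices_def by auto
  have F: "ext_edges V E 0 = {(Inl v, Inl (\<sigma> v)) | v. v \<in> V}" unfolding ext_edges_def E by auto
  define M :: "'a + nat \<Rightarrow> 'a + nat \<Rightarrow> 'a + nat \<Rightarrow> 'a + nat"
    where "M x y z = (if x = y then z else x)" for x y z
  define p :: "nat \<Rightarrow> 'a + nat \<Rightarrow> 'a + nat \<Rightarrow> 'a + nat \<Rightarrow> 'a + nat"
    where "p i x y z = (if i = 0 then x else if i = 1 then M x y z else z)" for i x y z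
  have polyM: "polymorphism3 (Inl ` V) {(Inl v, Inl (\<sigma> v)) | v. v \<in> V} (p i)" for i :: nat
    unfolding polymorphism3_def
  proof (intro conjI allI impI ballI)
    fix x y z :: "'a + nat" assume "x \<in> Inl ` V" "y \<in> Inl ` V" "z \<in> Inl ` V"
    then show "p i x y z \<in> Inl ` V" by (simp add: p_def M_def)
  next
    fix a1 b1 a2 b2 a3 b3 :: "'a + nat"
    assume "(a1, b1) \<in> {(Inl v, Inl (\<sigma> v)) | v. v \<in> V}"
      "(a2, b2) \<in> {(Inl v, Inl (\<sigma> v)) | v. v \<in> V}"
      "(a3, b3) \<in> {(Inl v, Inl (\<sigma> v)) | v. v \<in> V}"
    then obtain v1 v2 v3 where v: "v1 \<in> V" "v2 \<in> V" "v3 \<in> V"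
      "a1 = Inl v1" "b1 = Inl (\<sigma> v1)" "a2 = Inl v2" "b2 = Inl (\<sigma> v2)"
      "a3 = Inl v3" "b3 = Inl (\<sigma> v3)" by blast
    have "(\<sigma> v1 = \<sigma> v2) = (v1 = v2)" using inj by (auto dest: injD)
    then show "(p i a1 a2 a3, p i b1 b2 b3) \<in> {(Inl v, Inl (\<sigma> v)) | v. v \<in> V}"
      using v by (auto simp: p_def M_def)
  qed
  show ?thesis unfolding cong_permutable_def W F
    apply (rule exI[of _ p])
    using polyM by (auto simp: p_def M_def)
qed

lemma upper:
  assumes "permutational V E"
  shows "cong_permutable (ext_vertices V n) (ext_edges V E n) (2 * n + 2)"
proof -
  from assms obtain \<sigma> where s: "\<sigma> permutes V" and E: "E = {(v, \<sigma> v) | v. v \<in> V}"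
    and d: "digraph V E"
    unfolding permutational_def by blast
  have EV: "E \<subseteq> V \<times> V" using d unfolding digraph_def by blast
  show ?thesis
  proof (induction n)
    case 0 then show ?case using base_case[OF s E] by (simp add: numeral_2_eq_2)
  next
    case (Suc n)
    have "cong_permutable (insert (Inr (Suc n)) (ext_vertices V n))
        (ext_edges V E n \<union> (\<lambda>w. (w, Inr (Suc n))) ` ext_vertices V n) (2 * n + 2 + 2)"
      by (rule extend_top[OF ext_edges_sub[OF EV] _ Suc]) (auto simp: ext_vertices_def)
    then show ?case by (simp add: ext_vertices_Suc ext_edges_Suc)
  qed
qed


definition Lv :: "'a set \<Rightarrow> nat \<Rightarrow> ('a + nat) set" where
  "Lv V k = Inl ` V \<union> Inr ` {1..k}"

lemma lower:
  assumes "permutational V E" and "V \<noteq> {}"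
  shows "\<not> cong_permutable (ext_vertices V n) (ext_edges V E n) (2 * n + 1)"
proof
  assume "cong_permutable (ext_vertices V n) (ext_edges V E n) (2 * n + 1)"
  then obtain p where poly: "\<forall>i\<le>2*n+1. polymorphism3 (ext_vertices V n) (ext_edges V E n) (p i)"
    and p0: "\<forall>x\<in>ext_vertices V n. \<forall>y\<in>ext_vertices V n. \<forall>z\<in>ext_vertices V n. p 0 x y z = x"
    and pid: "\<forall>i<2*n+1. \<forall>x\<in>ext_vertices V n. \<forall>y\<in>ext_vertices V n. p i x x y = p (Suc i) x y y"
    and pm: "\<forall>x\<in>ext_vertices V n. \<forall>y\<in>ext_vertices V n. \<forall>z\<in>ext_vertices V n. p (2*n+1) x y z = z"
    unfolding cong_permutable_def by blast
  from assms(1) obtain \<sigma> where s: "\<sigma> permutes V" and E: "E = {(v, \<sigma> v) | v. v \<in> V}"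
    and fp: "\<forall>v\<in>V. \<sigma> v \<noteq> v"
    unfolding permutational_def by blast
  have inj: "inj \<sigma>" using s permutes_inj by blast
  have sV: "\<sigma> v \<in> V" if "v \<in> V" for v using s that by (simp add: permutes_in_image)
  let ?W = "ext_vertices V n" and ?F = "ext_edges V E n"
  have LW: "Lv V k \<subseteq> ?W" if "k \<le> n" for k using that unfolding Lv_def ext_vertices_def by auto
  have LW': "x \<in> ?W" if "x \<in> Lv V k" "k \<le> n" for x k using LW that by blast
  have Lmono: "x \<in> Lv V k" if "x \<in> Lv V j" "j \<le> k" for x j k using that unfolding Lv_def by auto
  have InlL: "Inl v \<in> Lv V k" if "v \<in> V" for v k using that unfolding Lv_def by auto
  have InrL: "Inr k \<in> Lv V k" if "1 \<le> k" for k using that unfolding Lv_def by auto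
  have F1: "w = Inl x" if "(w, Inl (\<sigma> x)) \<in> ?F" "x \<in> V" for w x
  proof -
    from that obtain a where "w = Inl a" "(a, \<sigma> x) \<in> E" unfolding ext_edges_def by auto
    then show ?thesis using inj E by (auto dest: injD)
  qed
  have F2: "(Inl x, Inl (\<sigma> x)) \<in> ?F" if "x \<in> V" for x using that E unfolding ext_edges_def by auto
  have F3: "(y, Inr k) \<in> ?F" if "y \<in> Lv V (k - 1)" "1 \<le> k" "k \<le> n" for y k
    using that unfolding ext_edges_def Lv_def by auto
  have edge: "(p i a1 a2 a3, p i b1 b2 b3) \<in> ?F"
    if "i \<le> 2*n+1" "(a1,b1) \<in> ?F" "(a2,b2) \<in> ?F" "(a3,b3) \<in> ?F" for i a1 a2 a3 b1 b2 b3
    using poly that unfolding polymorphism3_def by blast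
  have C: "\<forall>x\<in>V. \<forall>y\<in>Lv V (n-j). \<forall>z\<in>Lv V (n-j). p j (Inl x) y z = Inl x" if "j \<le> n" for j
    using that
  proof (induction j)
    case 0
    then show ?case using p0 LW' InlL by (metis diff_zero order_refl)
  next
    case (Suc j)
    let ?k = "n - j"
    have k1: "1 \<le> ?k" using Suc by simp
    have A: "p (Suc j) (Inl x') y y = Inl x'" if "x' \<in> V" "y \<in> Lv V ?k" for x' y
    proof -
      have "p j (Inl x') (Inl x') y = Inl x'" using Suc that InlL by auto
      moreover have "p j (Inl x') (Inl x') y = p (Suc j) (Inl x') y y"
        using pid Suc that LW' InlL by simp
      ultimately show ?thesis by simp
    qed
    show ?case
    proof (intro ballI)
      fix x y z assume x: "x \<in> V" and y: "y \<in> Lv V (n - Suc j)" and z: "z \<in> Lv V (n - Suc j)"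
      have "?k - 1 = n - Suc j" by simp
      then have "(y, Inr ?k) \<in> ?F" "(z, Inr ?k) \<in> ?F" using F3 y z k1 by auto
      then have "(p (Suc j) (Inl x) y z, p (Suc j) (Inl (\<sigma> x)) (Inr ?k) (Inr ?k)) \<in> ?F"
        using edge F2 x Suc by simp
      moreover have "p (Suc j) (Inl (\<sigma> x)) (Inr ?k) (Inr ?k) = Inl (\<sigma> x)"
        using A sV x InrL k1 by blast
      ultimately show "p (Suc j) (Inl x) y z = Inl x" using F1 x by metis
    qed
  qed
  have D: "\<forall>z\<in>V. \<forall>x\<in>Lv V (n-j). \<forall>y\<in>Lv V (n-j). p (2*n+1-j) x y (Inl z) = Inl z" if "j \<le> n" for j
    using that
  proof (induction j)
    case 0
    then show ?case using pm LW' InlL by (metis diff_zero order_refl)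
  next
    case (Suc j)
    let ?k = "n - j"
    have k1: "1 \<le> ?k" using Suc by simp
    have idx: "Suc (2*n+1 - Suc j) = 2*n+1-j" using Suc by simp
    have A: "p (2*n+1 - Suc j) y y (Inl z') = Inl z'" if "z' \<in> V" "y \<in> Lv V ?k" for z' y
    proof -
      have "p (2*n+1-j) y (Inl z') (Inl z') = Inl z'" using Suc that InlL by auto
      moreover have "p (2*n+1 - Suc j) y y (Inl z') = p (Suc (2*n+1 - Suc j)) y (Inl z') (Inl z')"
        using pid Suc that LW' InlL by simp
      ultimately show ?thesis using idx by simp
    qed
    show ?case
    proof (intro ballI)
      fix x y z assume z: "z \<in> V" and x: "x \<in> Lv V (n - Suc j)" and y: "y \<in> Lv V (n - Suc j)"
      have "?k - 1 = n - Suc j" by simp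
      then have "(x, Inr ?k) \<in> ?F" "(y, Inr ?k) \<in> ?F" using F3 x y k1 by auto
      then have "(p (2*n+1 - Suc j) x y (Inl z), p (2*n+1 - Suc j) (Inr ?k) (Inr ?k) (Inl (\<sigma> z))) \<in> ?F"
        using edge F2 z Suc by simp
      moreover have "p (2*n+1 - Suc j) (Inr ?k) (Inr ?k) (Inl (\<sigma> z)) = Inl (\<sigma> z)"
        using A sV z InrL k1 by blast
      ultimately show "p (2*n+1 - Suc j) x y (Inl z) = Inl z" using F1 z by metis
    qed
  qed
  from assms(2) obtain v where v: "v \<in> V" by blast
  let ?w = "\<sigma> v"
  have w: "?w \<in> V" "?w \<noteq> v" using sV fp v by auto
  have "p n (Inl v) (Inl v) (Inl ?w) = Inl v" using C[of n] v w InlL by simp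
  moreover have "p (n+1) (Inl v) (Inl ?w) (Inl ?w) = Inl ?w" using D[of n] v w InlL
    by (simp add: numeral_2_eq_2)
  moreover have "p n (Inl v) (Inl v) (Inl ?w) = p (Suc n) (Inl v) (Inl ?w) (Inl ?w)"
  proof -
    have "Inl v \<in> ext_vertices V n" "Inl ?w \<in> ext_vertices V n"
      using v w unfolding ext_vertices_def by auto
    moreover have "n < 2*n+1" by simp
    ultimately show ?thesis using pid by blast
  qed
  ultimately show False using w by simp
qed

theorem proposition6p3:
  fixes V :: "'a set" and E :: "('a \<times> 'a) set" and n :: nat
  assumes "permutational V E" and "V \<noteq> {}"
  shows "cong_permutable (ext_vertices V n) (ext_edges V E n) (2 * n + 2) \<and>
         \<not> cong_permutable (ext_vertices V n) (ext_edges V E n) (2 * n + 1)"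
  using upper[OF assms(1)] lower[OF assms] by blast

end
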